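(* Let $M,N\in\mathbf K_{\rm fnq}$ with $M\le_2N$, and let $c\in Q^M$ and $a\in P^M$. Then the equivalence class $a/E^N_c$ is included in $M$.
   Context: $\mathbf K_{\rm fnq}$ is the class of structures $M$ in the vocabulary consisting of unary predicates $P,Q$, a ternary relation $E$, and $n$-ary relations $Q_{n,k}$ ($n,k\ge1$), such that: (a) $P^M,Q^M$ partition the universe of $M$ and $P^M\neq\emptyset$; (b) $E^M\subseteq P^M\times P^M\times Q^M$, written $aE^M_cb$ for $(a,b,c)\in E^M$; (c) for $c\in Q^M$, $E^M_c$ is an equivalence relation on $P^M$ with $\sup\{|a/E^M_c|:a\in P^M\}$ finite; (d) $Q^M_{n,k}\subseteq(Q^M)^n$; (e) for $\bar c=\langle c_\ell:\ell<n\rangle\in{}^n(Q^M)$, $E^M_{\bar c}$ is the equivalence relation on $P^M$ generated by $\bigcup_\ell E^M_{c_\ell}$; (f) ${}^n(Q^M)=\bigcup_{k\ge1}Q^M_{n,k}$; (g) if $\bar c\in Q^M_{n,k}$ then $|a/E^M_{\bar c}|\le k$ for all $a\in P^M$. For $M,N\in\mathbf K_{\rm fnq}$: $M\le_2N$ iff $M$ is a substructure of $N$ and for every finite $A\subseteq N$ there is a one-to-one homomorphism from $N{\restriction}A$ into $M$ which is the identity on $A\cap M$. *)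

theory Defs
  imports Main
begin

text \<open>Q_{n,k} is represented by sets of lists of length n; tuples with n = 0
  or k = 0 are not part of the vocabulary and are required to be empty.\<close>

record 'a fnq_struct =
  univ :: "'a set"
  Pr :: "'a set"
  Qr :: "'a set"
  Er :: "'a \<Rightarrow> 'a \<Rightarrow> 'a \<Rightarrow> bool"   (* Er a b c  means  a E_c b *)
  Qnk :: "nat \<Rightarrow> nat \<Rightarrow> 'a list set"

definition Erel :: "('a, 'b) fnq_struct_scheme \<Rightarrow> 'a \<Rightarrow> ('a \<times> 'a) set" where
  "Erel M c = {(a, b). Er M a b c}"

definition Etuple :: "('a, 'b) fnq_struct_scheme \<Rightarrow> 'a list \<Rightarrow> ('a \<times> 'a) set" where
  "Etuple M cs = (let R = (\<Union>c\<in>set cs. Erel M c) in (Id_on (Pr M) \<union> R \<union> R\<inverse>)\<^sup>+)"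

definition eclass :: "('a \<times> 'a) set \<Rightarrow> 'a \<Rightarrow> 'a set" where
  "eclass R a = {b. (a, b) \<in> R}"

definition K_fnq :: "('a, 'b) fnq_struct_scheme \<Rightarrow> bool" where
  "K_fnq M \<longleftrightarrow>
     \<comment> \<open>(a)\<close>
     Pr M \<union> Qr M = univ M \<and> Pr M \<inter> Qr M = {} \<and> Pr M \<noteq> {} \<and>
     \<comment> \<open>(b)\<close>
     (\<forall>a b c. Er M a b c \<longrightarrow> a \<in> Pr M \<and> b \<in> Pr M \<and> c \<in> Qr M) \<and>
     \<comment> \<open>(c)\<close>
     (\<forall>c\<in>Qr M. equiv (Pr M) (Erel M c) \<and>
        (\<exists>k::nat. \<forall>a\<in>Pr M. finite (eclass (Erel M c) a) \<and> card (eclass (Erel M c) a) \<le> k)) \<and>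
     \<comment> \<open>(d), and only indices n,k >= 1 occur\<close>
     (\<forall>n k. Qnk M n k \<subseteq> {cs. length cs = n \<and> set cs \<subseteq> Qr M}) \<and>
     (\<forall>n k. (n = 0 \<or> k = 0) \<longrightarrow> Qnk M n k = {}) \<and>
     \<comment> \<open>(f)\<close>
     (\<forall>n\<ge>1. \<forall>cs. length cs = n \<and> set cs \<subseteq> Qr M \<longrightarrow> (\<exists>k\<ge>1. cs \<in> Qnk M n k)) \<and>
     \<comment> \<open>(g)\<close>
     (\<forall>n k cs. cs \<in> Qnk M n k \<longrightarrow>
        (\<forall>a\<in>Pr M. finite (eclass (Etuple M cs) a) \<and> card (eclass (Etuple M cs) a) \<le> k))"

definition substructure :: "('a, 'b) fnq_struct_scheme \<Rightarrow> ('a, 'b) fnq_struct_scheme \<Rightarrow> bool" where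
  "substructure M N \<longleftrightarrow>
     univ M \<subseteq> univ N \<and>
     Pr M = Pr N \<inter> univ M \<and> Qr M = Qr N \<inter> univ M \<and>
     (\<forall>a b c. Er M a b c \<longleftrightarrow> Er N a b c \<and> a \<in> univ M \<and> b \<in> univ M \<and> c \<in> univ M) \<and>
     (\<forall>n k. Qnk M n k = {cs \<in> Qnk N n k. set cs \<subseteq> univ M})"

definition inj_hom_restr ::
  "('a \<Rightarrow> 'a) \<Rightarrow> ('a, 'b) fnq_struct_scheme \<Rightarrow> 'a set \<Rightarrow> ('a, 'b) fnq_struct_scheme \<Rightarrow> bool" where
  "inj_hom_restr f N A M \<longleftrightarrow>
     f ` A \<subseteq> univ M \<and> inj_on f A \<and>
     (\<forall>a\<in>A. a \<in> Pr N \<longrightarrow> f a \<in> Pr M) \<and>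
     (\<forall>a\<in>A. a \<in> Qr N \<longrightarrow> f a \<in> Qr M) \<and>
     (\<forall>a\<in>A. \<forall>b\<in>A. \<forall>c\<in>A. Er N a b c \<longrightarrow> Er M (f a) (f b) (f c)) \<and>
     (\<forall>n k cs. cs \<in> Qnk N n k \<and> set cs \<subseteq> A \<longrightarrow> map f cs \<in> Qnk M n k)"

definition le2 :: "('a, 'b) fnq_struct_scheme \<Rightarrow> ('a, 'b) fnq_struct_scheme \<Rightarrow> bool" where
  "le2 M N \<longleftrightarrow> substructure M N \<and>
     (\<forall>A. finite A \<and> A \<subseteq> univ N \<longrightarrow>
        (\<exists>f. inj_hom_restr f N A M \<and> (\<forall>a\<in>A \<inter> univ M. f a = a)))"

end

theory Submission
  imports Defs
begin

theorem claim3p3: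
  fixes M N :: "'a fnq_struct"
  assumes "K_fnq M" and "K_fnq N" and "le2 M N"
    and "c \<in> Qr M" and "a \<in> Pr M"
  shows "eclass (Erel N c) a \<subseteq> univ M"
proof
  fix b assume bN: "b \<in> eclass (Erel N c) a"
  show "b \<in> univ M"
  proof (rule ccontr)
    assume bM: "b \<notin> univ M"
    define X where "X = eclass (Erel M c) a"
    have Ebn: "Er N a b c" using bN by (simp add: eclass_def Erel_def)
    have KM1: "Pr M \<union> Qr M = univ M" and KM2: "\<forall>a b c. Er M a b c \<longrightarrow> a \<in> Pr M \<and> b \<in> Pr M \<and> c \<in> Qr M"
      and KM3: "\<forall>c\<in>Qr M. (\<exists>k::nat. \<forall>a\<in>Pr M. finite (eclass (Erel M c) a) \<and> card (eclass (Erel M c) a) \<le> k)"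
      using assms(1) unfolding K_fnq_def by simp_all
    have KN1: "Pr N \<union> Qr N = univ N" and KN2: "\<forall>a b c. Er N a b c \<longrightarrow> a \<in> Pr N \<and> b \<in> Pr N \<and> c \<in> Qr N"
      using assms(2) unfolding K_fnq_def by simp_all
    have finX: "finite X" using KM3 assms(4,5) unfolding X_def by blast
    have XM: "X \<subseteq> univ M" using KM1 KM2 unfolding X_def eclass_def Erel_def by blast
    have sub: "substructure M N" using assms(3) by (simp add: le2_def)
    have MN: "univ M \<subseteq> univ N" using sub by (simp add: substructure_def)
    have cM: "c \<in> univ M" using assms(4) KM1 by blast
    have aM: "a \<in> univ M" using assms(5) KM1 by blast
    have bUN: "b \<in> univ N" using KN1 KN2 Ebn by blast
    define A where "A = insert a (insert b (insert c X))"
    have "finite A \<and> A \<subseteq> univ N" using finX XM MN cM aM bUN unfolding A_def by blast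
    then obtain f where hom: "inj_hom_restr f N A M" and fid: "\<forall>x\<in>A \<inter> univ M. f x = x"
      using assms(3) unfolding le2_def by blast
    have "Er M (f a) (f b) (f c)" using hom Ebn unfolding inj_hom_restr_def A_def by blast
    moreover have "f a = a" "f c = c" using fid aM cM unfolding A_def by auto
    ultimately have fbX: "f b \<in> X" unfolding X_def eclass_def Erel_def by simp
    have "f (f b) = f b" using fid fbX XM unfolding A_def by blast
    moreover have "inj_on f A" using hom unfolding inj_hom_restr_def by blast
    ultimately have "f b = b" using fbX unfolding A_def by (meson inj_onD insertCI)
    then show False using fbX XM bM by auto
  qed
qed

end
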